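(* Assume the environments are defined by a class of linear spurious correlation latent SCMs $\mathcal{M}_\mathcal{E}$ and let $e^+$ be any test domain with $\mathcal{M}_{e^+}\in\mathcal{M}_\mathcal{E}$. Then for empirical risk minimization (i.e., with no constraint on $\theta\in\mathbb{R}^d$) in logistic regression, $$\mathbb{E}_{({\mathbf{x}}_{e^+},{\textnormal{y}}_{e^+})\sim\mathbb{P}_{\mathrm{test}}}[\ell_{\mathrm{LL}}(\theta^\top{\mathbf{x}}_{e^+},{\textnormal{y}}_{e^+})]\le\mathbb{E}_{({\mathbf{x}},{\textnormal{y}})\sim\mathbb{P}_{\mathrm{train}}}[\ell_{\mathrm{LL}}(\theta^\top{\mathbf{x}},{\textnormal{y}})]+\|\theta\|\sqrt{\lambda_1(e^+)}.$$
   Context: Setting. $\mathcal{E}$ is a set of domains; each domain $e$ has an SCM sharing exogenous noise ${\mathbf{u}}\sim\mathbb{P}_\mathcal{U}$, latent variables ${\mathbf{z}}$, observed ${\mathbf{x}}\in\mathbb{R}^d$ and target ${\textnormal{y}}\in\{-1,1\}$. Latent mechanisms $f_{e,i}$ may depend on $e$ (solution map $f_e:{\bm{u}}\mapsto{\bm{z}}$); the observed mechanisms are shared: ${\mathbf{x}}_e=g_{\mathbf{x}}(f_e({\mathbf{u}}))$ with $g_{\mathbf{x}}$ linear, and ${\textnormal{y}}$ is the sign of a linear function of ${\mathbf{z}}$; the SCMs are linear. The intervention set $\mathcal{I}(\mathcal{F}_\mathcal{E})=\{i:f_{e,i}\neq f_{e',i}\text{ for some }e,e'\}$ contains no ancestor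 of ${\textnormal{y}}$ (spurious correlation assumption). Training domains $\mathcal{E}_{\mathrm{train}}\subseteq\mathcal{E}$ have weights $\mathbb{P}(e)$ and $\mathbb{P}_{\mathrm{train}}=\sum_e\mathbb{P}(e)\mathbb{P}_e$; $\mathbb{P}_{\mathrm{test}}$ is the distribution of domain $e^+$. With the same ${\mathbf{u}}$, ${\mathbf{x}}_{e^+}=g_{\mathbf{x}}(f_{e^+}({\mathbf{u}}))$ and ${\mathbf{x}}_{e^+\to e}=g_{\mathbf{x}}(f_e({\mathbf{u}}))$. $\lambda_1(e^+)$ is the largest eigenvalue of $M_{e^+}:=\sum_{e\in\mathcal{E}_{\mathrm{train}}}\mathbb{P}(e)\mathbb{E}_{\mathbf{u}}[({\mathbf{x}}_{e^+}-{\mathbf{x}}_{e^+\to e})({\mathbf{x}}_{e^+}-{\mathbf{x}}_{e^+\to e})^\top]$. $\ell_{\mathrm{LL}}(t,y)=\log(1+e^{-yt})$ and $\|\cdot\|$ is the Euclidean norm. *)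

theory Defs
  imports "HOL-Analysis.Analysis" "HOL-Probability.Probability"
begin

definition ell_LL :: "real \<Rightarrow> real \<Rightarrow> real" where
  "ell_LL t y = ln (1 + exp (- y * t))"

text \<open>Linear latent SCM of domain e: z = B e z + C e u (B: latent-to-latent weights,
  C: noise weights). The mechanism of latent variable i in domain e.\<close>
definition mech :: "('e \<Rightarrow> real^'k^'k) \<Rightarrow> ('e \<Rightarrow> real^'m^'k) \<Rightarrow> 'e \<Rightarrow> 'k
    \<Rightarrow> (real^'k \<Rightarrow> real^'m \<Rightarrow> real)" where
  "mech B C e i = (\<lambda>z u. (B e $ i) \<bullet> z + (C e $ i) \<bullet> u)"

definition acyclic_lin :: "real^'k^'k \<Rightarrow> bool" where
  "acyclic_lin Bm \<longleftrightarrow> (\<exists>r :: 'k \<Rightarrow> nat. \<forall>i j. Bm $ i $ j \<noteq> 0 \<longrightarrow> r j < r i)"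

text \<open>Solution map f_e : u \<mapsto> z of the linear SCM z = B z + C u.\<close>
definition sol_map :: "real^'k^'k \<Rightarrow> real^'m^'k \<Rightarrow> real^'m \<Rightarrow> real^'k" where
  "sol_map Bm Cm u = (matrix_inv (mat 1 - Bm) ** Cm) *v u"

text \<open>Label: y = sign(w^T z) in {-1,1} (convention: sign 0 = 1).\<close>
definition label :: "real^'k \<Rightarrow> real^'k \<Rightarrow> real" where
  "label w z = (if w \<bullet> z \<ge> 0 then 1 else -1)"

definition is_parent :: "'e set \<Rightarrow> ('e \<Rightarrow> real^'k^'k) \<Rightarrow> 'k \<Rightarrow> 'k \<Rightarrow> bool" where
  "is_parent E B j i \<longleftrightarrow> (\<exists>e\<in>E. B e $ i $ j \<noteq> 0)"

text \<open>Ancestors of the target y (whose parents are the i with w_i \<noteq> 0).\<close>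
inductive anc_y :: "'e set \<Rightarrow> ('e \<Rightarrow> real^'k^'k) \<Rightarrow> real^'k \<Rightarrow> 'k \<Rightarrow> bool"
  for E B w where
  par_y: "w $ i \<noteq> 0 \<Longrightarrow> anc_y E B w i"
| par_anc: "is_parent E B i j \<Longrightarrow> anc_y E B w j \<Longrightarrow> anc_y E B w i"

definition interv_set :: "'e set \<Rightarrow> ('e \<Rightarrow> real^'k^'k) \<Rightarrow> ('e \<Rightarrow> real^'m^'k) \<Rightarrow> 'k set" where
  "interv_set E B C = {i. \<exists>e\<in>E. \<exists>e'\<in>E. mech B C e i \<noteq> mech B C e' i}"

definition lambda_max :: "real^'n^'n \<Rightarrow> real" where
  "lambda_max A = Max {l. \<exists>v. v \<noteq> 0 \<and> A *v v = l *\<^sub>R v}"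

definition M_shift :: "(real^'m) measure \<Rightarrow> 'e set \<Rightarrow> ('e \<Rightarrow> real) \<Rightarrow> real^'k^'d
    \<Rightarrow> ('e \<Rightarrow> real^'k^'k) \<Rightarrow> ('e \<Rightarrow> real^'m^'k) \<Rightarrow> 'e \<Rightarrow> real^'d^'d" where
  "M_shift Mu Etr P G B C ep = (\<chi> a b. \<Sum>e\<in>Etr. P e *
     integral\<^sup>L Mu (\<lambda>u. (G *v sol_map (B ep) (C ep) u - G *v sol_map (B e) (C e) u) $ a
                   * (G *v sol_map (B ep) (C ep) u - G *v sol_map (B e) (C e) u) $ b))"

end

theory Submission
  imports Defs
begin

lemma acyc_inj:
  fixes Bm :: "real^'k^'k"
  assumes "acyclic_lin Bm" and "(mat 1 - Bm) *v x = 0"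
  shows "x = 0"
proof -
  obtain r :: "'k \<Rightarrow> nat" where r: "\<And>i j. Bm $ i $ j \<noteq> 0 \<Longrightarrow> r j < r i"
    using assms(1) unfolding acyclic_lin_def by blast
  have "x - Bm *v x = 0" using assms(2)
    by (simp only: matrix_vector_mult_diff_rdistrib matrix_vector_mul_lid)
  then have fx: "x = Bm *v x" by (simp only: right_minus_eq)
  have "\<forall>i. r i = n \<longrightarrow> x $ i = 0" for n
  proof (induction n rule: less_induct)
    case (less n)
    show ?case
    proof (intro allI impI)
      fix i assume ri: "r i = n"
      have "x $ i = (Bm *v x) $ i"
        using fx by (rule arg_cong[where f="\<lambda>v. v $ i"])
      also have "\<dots> = (\<Sum>j\<in>UNIV. Bm $ i $ j * x $ j)"
        by (simp add: matrix_vector_mult_def)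
      also have "\<dots> = 0"
      proof (rule sum.neutral, rule ballI)
        fix j :: 'k
        show "Bm $ i $ j * x $ j = 0"
        proof (cases "Bm $ i $ j = 0")
          case False
          then have "r j < n" using r[OF False] ri by simp
          then have "\<forall>i. r i = r j \<longrightarrow> x $ i = 0" by (rule less)
          then show ?thesis by simp
        qed simp
      qed
      finally show "x $ i = 0" .
    qed
  qed
  then show ?thesis by (simp add: vec_eq_iff)
qed

lemma acyc_invertible:
  fixes Bm :: "real^'k^'k"
  assumes "acyclic_lin Bm"
  shows "invertible (mat 1 - Bm)"
proof -
  have "inj ((*v) (mat 1 - Bm))"
  proof (rule injI)
    fix x y assume "(mat 1 - Bm) *v x = (mat 1 - Bm) *v y"
    then have "(mat 1 - Bm) *v (x - y) = 0"
      by (simp add: matrix_vector_mult_diff_distrib)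
    then show "x = y" using acyc_inj[OF assms, of "x - y"] by auto
  qed
  then obtain A' where "A' ** (mat 1 - Bm) = mat 1"
    using matrix_left_invertible_injective by blast
  then show ?thesis unfolding invertible_def
    using matrix_left_right_inverse by blast
qed

lemma sol_eq:
  fixes Bm :: "real^'k^'k"
  assumes "acyclic_lin Bm"
  shows "sol_map Bm Cm u = Bm *v sol_map Bm Cm u + Cm *v u"
proof -
  have "(mat 1 - Bm) ** matrix_inv (mat 1 - Bm) = mat 1"
    using acyc_invertible[OF assms] unfolding invertible_def matrix_inv_def
    by (rule someI_ex[where P="\<lambda>A'. (mat 1 - Bm) ** A' = mat 1 \<and> A' ** (mat 1 - Bm) = mat 1", THEN conjunct1])
  then have "(mat 1 - Bm) *v sol_map Bm Cm u = Cm *v u"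
    unfolding sol_map_def by (simp add: matrix_vector_mul_assoc matrix_mul_assoc)
  moreover have "(mat 1 - Bm) *v sol_map Bm Cm u = sol_map Bm Cm u - Bm *v sol_map Bm Cm u"
    by (simp only: matrix_vector_mult_diff_rdistrib matrix_vector_mul_lid)
  ultimately have "sol_map Bm Cm u - Bm *v sol_map Bm Cm u = Cm *v u" by simp
  then show ?thesis
    by (simp only: diff_eq_eq add.commute)
qed

lemma vec_inner_eq_imp_eq:
  fixes a b :: "'a::real_inner"
  assumes "\<And>z. a \<bullet> z = b \<bullet> z" shows "a = b"
proof -
  have "(a - b) \<bullet> (a - b) = 0" using assms[of "a - b"] by (simp add: inner_diff_left)
  then show ?thesis by simp
qed

lemma lin_comp:
  fixes X :: "real^'k^'k" and Y :: "real^'m^'k"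
  shows "(X *v z + Y *v v) $ i = (\<Sum>j\<in>UNIV. X $ i $ j * z $ j) + (Y $ i) \<bullet> v"
  by (simp add: matrix_vector_mul_component inner_vec_def)

lemma rows_eq:
  fixes B :: "'e \<Rightarrow> real^'k^'k" and C :: "'e \<Rightarrow> real^'m^'k" and w :: "real^'k"
  assumes  sp: "\<forall>i\<in>interv_set E B C. \<not> anc_y E B w i"
    and eE: "e \<in> E" and epE: "ep \<in> E" and ai: "anc_y E B w i"
  shows "B e $ i = B ep $ i \<and> C e $ i = C ep $ i"
  proof -
    have "i \<notin> interv_set E B C"
    proof
      assume "i \<in> interv_set E B C"
      from bspec[OF sp this] ai show False by contradiction
    qed
    then have "\<not>(\<exists>e\<in>E. \<exists>e'\<in>E. mech B C e i \<noteq> mech B C e' i)"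
      unfolding interv_set_def by blast
    then have eqm: "mech B C e i = mech B C ep i" using eE epE by blast
    have h: "(B e $ i) \<bullet> z + (C e $ i) \<bullet> v = (B ep $ i) \<bullet> z + (C ep $ i) \<bullet> v" for z v
      using fun_cong[OF fun_cong[OF eqm, of z], of v] unfolding mech_def .
    have "B e $ i = B ep $ i" by (rule vec_inner_eq_imp_eq) (use h[of _ 0] in simp)
    moreover have "C e $ i = C ep $ i" by (rule vec_inner_eq_imp_eq) (use h[of 0] in simp)
    ultimately show ?thesis by simp
  qed

lemma label_same:
  fixes B :: "'e \<Rightarrow> real^'k^'k" and C :: "'e \<Rightarrow> real^'m^'k" and w :: "real^'k"
  assumes acyc: "\<forall>e\<in>E. acyclic_lin (B e)"
    and sp: "\<forall>i\<in>interv_set E B C. \<not> anc_y E B w i"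
    and eE: "e \<in> E" and epE: "ep \<in> E"
  shows "label w (sol_map (B ep) (C ep) u) = label w (sol_map (B e) (C e) u)"
proof -
  have rows: "B e $ i = B ep $ i \<and> C e $ i = C ep $ i" if ai: "anc_y E B w i" for i
    by (rule rows_eq[OF sp eE epE ai])
  obtain r :: "'k \<Rightarrow> nat" where r: "\<And>i j. B ep $ i $ j \<noteq> 0 \<Longrightarrow> r j < r i"
    using acyc epE unfolding acyclic_lin_def by blast
  define ze where "ze = sol_map (B e) (C e) u"
  define zp where "zp = sol_map (B ep) (C ep) u"
  have ze_eq: "ze = B e *v ze + C e *v u" unfolding ze_def using sol_eq acyc eE by blast
  have zp_eq: "zp = B ep *v zp + C ep *v u" unfolding zp_def using sol_eq acyc epE by blast
  have "\<forall>i. r i = n \<longrightarrow> anc_y E B w i \<longrightarrow> ze $ i = zp $ i" for n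
  proof (induction n rule: less_induct)
    case (less n)
    show ?case
    proof (intro allI impI)
      fix i assume ri: "r i = n" and ai: "anc_y E B w i"
      have "ze $ i = (B e *v ze + C e *v u) $ i"
        using ze_eq by (rule arg_cong[where f="\<lambda>v. v $ i"])
      also have "\<dots> = (\<Sum>j\<in>UNIV. B e $ i $ j * ze $ j) + (C e $ i) \<bullet> u"
        by (rule lin_comp)
      also have "\<dots> = (\<Sum>j\<in>UNIV. B ep $ i $ j * zp $ j) + (C ep $ i) \<bullet> u"
      proof -
        have hj: "B ep $ i $ j * ze $ j = B ep $ i $ j * zp $ j" for j
        proof (cases "B ep $ i $ j = 0")
          case False
          then have rj: "r j < n" using r[OF False] ri by simp
          have "is_parent E B j i" unfolding is_parent_def using False epE by blast
          then have aj: "anc_y E B w j" by (rule anc_y.par_anc[OF _ ai])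
          have hl: "\<forall>i. r i = r j \<longrightarrow> anc_y E B w i \<longrightarrow> ze $ i = zp $ i" by (rule less[OF rj])
          have "ze $ j = zp $ j" using hl[rule_format, of j] aj by simp
          then show ?thesis by simp
        qed simp
        have "(\<Sum>j\<in>UNIV. B ep $ i $ j * ze $ j) = (\<Sum>j\<in>UNIV. B ep $ i $ j * zp $ j)"
          by (rule sum.cong[OF refl hj])
        then show ?thesis using rows[OF ai] by simp
      qed
      also have "\<dots> = (B ep *v zp + C ep *v u) $ i"
        by (rule lin_comp[symmetric])
      also have "\<dots> = zp $ i"
        using zp_eq[symmetric] by (rule arg_cong[where f="\<lambda>v. v $ i"])
      finally show "ze $ i = zp $ i" .
    qed
  qed
  note main = this
  have anc_eq: "ze $ i = zp $ i" if "anc_y E B w i" for i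
    using main[of "r i"] that by simp
  have "w \<bullet> ze = w \<bullet> zp"
    unfolding inner_vec_def
  proof (rule sum.cong[OF refl])
    fix i show "w $ i \<bullet> ze $ i = w $ i \<bullet> zp $ i"
    proof (cases "w $ i = 0")
      case False
      then show ?thesis using anc_eq[OF anc_y.par_y[OF False]] by simp
    qed simp
  qed
  then show ?thesis unfolding label_def ze_def[symmetric] zp_def[symmetric] by simp
qed

lemma sym_inner:
  fixes M :: "real^'d^'d"
  assumes "transpose M = M"
  shows "x \<bullet> (M *v y) = y \<bullet> (M *v x)"
proof -
  have "x \<bullet> (M *v y) = (x v* M) \<bullet> y" by (simp add: dot_lmul_matrix)
  also have "x v* M = transpose M *v x" by simp
  also have "\<dots> = M *v x" using assms by simp
  finally show ?thesis by (simp add: inner_commute)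
qed

lemma eig_finite:
  fixes M :: "real^'d^'d"
  assumes sym: "transpose M = M"
  shows "finite {l. \<exists>v. v \<noteq> 0 \<and> M *v v = l *\<^sub>R v}"
proof -
  define Ev where "Ev = {l. \<exists>v. v \<noteq> 0 \<and> M *v v = l *\<^sub>R v}"
  define f where "f l = (SOME v. v \<noteq> 0 \<and> M *v v = l *\<^sub>R v)" for l
  have f: "f l \<noteq> 0 \<and> M *v f l = l *\<^sub>R f l" if "l \<in> Ev" for l
    using that unfolding Ev_def f_def by (rule CollectE) (rule someI_ex)
  have orth: "f l \<bullet> f l' = 0" if "l \<in> Ev" "l' \<in> Ev" "l \<noteq> l'" for l l'
  proof -
    have "l * (f l \<bullet> f l') = (M *v f l) \<bullet> f l'" using f[OF that(1)] by simp
    also have "\<dots> = f l \<bullet> (M *v f l')" using sym_inner[OF sym, of "f l'" "f l"] by (simp add: inner_commute)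
    also have "\<dots> = l' * (f l \<bullet> f l')" using f[OF that(2)] by simp
    finally have "(l - l') * (f l \<bullet> f l') = 0" by (simp add: algebra_simps)
    then show ?thesis using that(3) by simp
  qed
  have injf: "inj_on f Ev"
  proof (rule inj_onI)
    fix l l' assume l: "l \<in> Ev" and l': "l' \<in> Ev" and eq: "f l = f l'"
    show "l = l'"
    proof (rule ccontr)
      assume "l \<noteq> l'"
      then have "f l \<bullet> f l' = 0" using orth l l' by blast
      then have "f l = 0" using eq by simp
      then show False using f[OF l] by simp
    qed
  qed
  have "finite Ev \<and> card Ev \<le> DIM(real^'d)"
  proof (rule finite_if_finite_subsets_card_bdd)
    fix G assume G: "G \<subseteq> Ev" "finite G"
    have "independent (f ` G)"
    proof (rule pairwise_orthogonal_independent)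
      show "pairwise orthogonal (f ` G)"
        unfolding pairwise_def orthogonal_def
      proof (intro ballI impI)
        fix x y assume x: "x \<in> f ` G" and y: "y \<in> f ` G" and xy: "x \<noteq> y"
        from x obtain l where l: "l \<in> G" "x = f l" by blast
        from y obtain l' where l': "l' \<in> G" "y = f l'" by blast
        have "l \<noteq> l'" using xy l l' by auto
        then show "x \<bullet> y = 0" using orth[of l l'] l l' G(1) by auto
      qed
      show "0 \<notin> f ` G"
      proof
        assume "0 \<in> f ` G"
        then obtain l where "l \<in> G" "0 = f l" by blast
        then show False using f[of l] G(1) by auto
      qed
    qed
    then have "card (f ` G) \<le> DIM(real^'d)" using independent_bound by blast
    moreover have "card (f ` G) = card G"
      using card_image inj_on_subset[OF injf G(1)] by blast
    ultimately show "card G \<le> DIM(real^'d)" by simp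
  qed
  then show ?thesis unfolding Ev_def by blast
qed

lemma quad_zero:
  fixes D K :: real
  assumes "\<And>t. 0 \<le> 2 * t * D + t^2 * K" and "K \<ge> 0"
  shows "D = 0"
proof -
  have k1: "K + 1 \<noteq> 0" "K + 1 > 0" using assms(2) by auto
  define t where "t = - D / (K + 1)"
  have ht: "t * (K + 1) = - D" using k1 by (simp add: t_def)
  have "(2 * t * D + t^2 * K) * (K + 1)^2 = 2 * D * (t * (K + 1)) * (K + 1) + K * (t * (K + 1))^2"
    by (simp add: algebra_simps power2_eq_square)
  also have "\<dots> = 2 * D * (- D) * (K + 1) + K * (- D)^2" by (simp only: ht)
  also have "\<dots> = -(D^2 * (K + 2))" by (simp add: algebra_simps power2_eq_square)
  finally have eq: "(2 * t * D + t^2 * K) * (K + 1)^2 = -(D^2 * (K + 2))" .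
  have "0 \<le> (2 * t * D + t^2 * K) * (K + 1)^2"
    using assms(1)[of t] by simp
  then have "D^2 * (K + 2) \<le> 0" unfolding eq by simp
  moreover have "K + 2 > 0" using assms(2) by simp
  ultimately have "D^2 \<le> 0" by (simp add: mult_le_0_iff)
  then show ?thesis by simp
qed

lemma rayleigh:
  fixes M :: "real^'d^'d"
  assumes sym: "transpose M = M"
  shows "x \<bullet> (M *v x) \<le> lambda_max M * (norm x)^2"
proof -
  define q where "q y = y \<bullet> (M *v y)" for y :: "real^'d"
  have qs: "q (c *\<^sub>R y) = c^2 * q y" for c y
    unfolding q_def by (simp add: matrix_vector_mult_scaleR power2_eq_square)
  have cont: "continuous_on (sphere 0 1) q"
    unfolding q_def by (intro continuous_intros linear_continuous_on matrix_vector_mul_linear) 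
  have "sphere (0::real^'d) 1 \<noteq> {}" by simp
  then obtain v where v: "v \<in> sphere 0 1" and vmax: "\<And>y. y \<in> sphere 0 1 \<Longrightarrow> q y \<le> q v"
    using continuous_attains_sup[OF compact_sphere _ cont] by blast
  define \<mu> where "\<mu> = q v"
  have nv: "norm v = 1" using v by simp
  have all: "q y \<le> \<mu> * (norm y)^2" for y
  proof (cases "y = 0")
    case True then show ?thesis by (simp add: q_def)
  next
    case False
    then have ny: "norm y > 0" by simp
    have "q ((1 / norm y) *\<^sub>R y) \<le> \<mu>" unfolding \<mu>_def
      by (rule vmax) (use ny in simp)
    then have "(1 / norm y)^2 * q y \<le> \<mu>" by (simp add: qs)
    then show ?thesis using ny by (simp add: field_simps power2_eq_square)
  qed
  define d where "d = \<mu> *\<^sub>R v - M *v v"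
  have "\<And>t. 0 \<le> 2 * t * (norm d)^2 + t^2 * (\<mu> * (norm d)^2 - q d)"
  proof -
    fix t :: real
    have e1: "q (v + t *\<^sub>R d) = q v + 2 * t * (d \<bullet> (M *v v)) + t^2 * q d"
      using sym_inner[OF sym, of v d]
      by (simp add: q_def matrix_vector_right_distrib matrix_vector_mult_scaleR inner_add_left
          inner_add_right power2_eq_square algebra_simps)
    have vv: "v \<bullet> v = 1" using nv by (simp add: power2_norm_eq_inner[symmetric])
    have "(norm (v + t *\<^sub>R d))^2 = (v + t *\<^sub>R d) \<bullet> (v + t *\<^sub>R d)"
      by (rule power2_norm_eq_inner)
    also have "\<dots> = v \<bullet> v + 2 * t * (v \<bullet> d) + t^2 * (d \<bullet> d)"
      by (simp add: inner_add_left inner_add_right power2_eq_square algebra_simps inner_commute)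
    finally have e2: "(norm (v + t *\<^sub>R d))^2 = 1 + 2 * t * (v \<bullet> d) + t^2 * (norm d)^2"
      using vv by (simp add: power2_norm_eq_inner)
    have e3: "(norm d)^2 = \<mu> * (v \<bullet> d) - d \<bullet> (M *v v)"
      unfolding d_def power2_norm_eq_inner
      by (simp add: inner_diff_left inner_diff_right inner_commute algebra_simps)
    have "q (v + t *\<^sub>R d) \<le> \<mu> * (norm (v + t *\<^sub>R d))^2" by (rule all)
    then show "0 \<le> 2 * t * (norm d)^2 + t^2 * (\<mu> * (norm d)^2 - q d)"
      unfolding e1 e2 e3 \<mu>_def[symmetric] by (simp add: algebra_simps)
  qed
  moreover have "\<mu> * (norm d)^2 - q d \<ge> 0" using all[of d] by simp
  ultimately have "(norm d)^2 = 0" by (rule quad_zero)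
  then have "M *v v = \<mu> *\<^sub>R v" unfolding d_def by simp
  moreover have "v \<noteq> 0" using nv by auto
  ultimately have "\<mu> \<in> {l. \<exists>v. v \<noteq> 0 \<and> M *v v = l *\<^sub>R v}" by blast
  then have "\<mu> \<le> lambda_max M"
    unfolding lambda_max_def using eig_finite[OF sym] by (rule Max_ge[rotated])
  then have "\<mu> * (norm x)^2 \<le> lambda_max M * (norm x)^2"
    by (rule mult_right_mono) simp
  then show ?thesis using all[of x] unfolding q_def by linarith
qed

lemma meas_Mu:
  assumes "sets Mu = sets borel" and "f \<in> borel_measurable borel"
  shows "f \<in> borel_measurable Mu"
  using assms measurable_cong_sets[OF assms(1) refl, of borel] by simp

lemma abs_prod_le: "\<bar>(x::real) * y\<bar> \<le> x^2 + y^2"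
proof -
  have "0 \<le> (\<bar>x\<bar> - \<bar>y\<bar>) * (\<bar>x\<bar> - \<bar>y\<bar>)" by simp
  then have "2 * (\<bar>x\<bar> * \<bar>y\<bar>) \<le> \<bar>x\<bar> * \<bar>x\<bar> + \<bar>y\<bar> * \<bar>y\<bar>" by (simp add: algebra_simps)
  moreover have "\<bar>x\<bar> * \<bar>x\<bar> = x^2" "\<bar>y\<bar> * \<bar>y\<bar> = y^2" by (simp_all add: power2_eq_square abs_mult_self_eq)
  moreover have "\<bar>x * y\<bar> = \<bar>x\<bar> * \<bar>y\<bar>" by (rule abs_mult)
  moreover have "0 \<le> \<bar>x\<bar> * \<bar>y\<bar>" by simp
  ultimately show ?thesis by linarith
qed

lemma int_comp:
  fixes Mu :: "(real^'m) measure"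
  assumes ps: "prob_space Mu" and sb: "sets Mu = sets borel"
    and sq: "\<forall>l. integrable Mu (\<lambda>u. (u $ l)\<^sup>2)"
  shows "integrable Mu (\<lambda>u. u $ l)"
proof -
  interpret prob_space Mu by (rule ps)
  have "integrable Mu (\<lambda>u. 1 + (u $ l)\<^sup>2)" using sq by simp
  moreover have "(\<lambda>u. u $ l) \<in> borel_measurable Mu" by (rule meas_Mu[OF sb]) measurable
  moreover have "AE u in Mu. norm (u $ l) \<le> norm (1 + (u $ l)\<^sup>2)"
  proof (rule AE_I2)
    fix u :: "real^'m"
    have "\<bar>u $ l\<bar> \<le> 1 + (u $ l)\<^sup>2" using abs_prod_le[of "u $ l" 1] by simp
    then show "norm (u $ l) \<le> norm (1 + (u $ l)\<^sup>2)" by simp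
  qed
  ultimately show ?thesis by (rule Bochner_Integration.integrable_bound)
qed

lemma int_comp2:
  fixes Mu :: "(real^'m) measure"
  assumes ps: "prob_space Mu" and sb: "sets Mu = sets borel"
    and sq: "\<forall>l. integrable Mu (\<lambda>u. (u $ l)\<^sup>2)"
  shows "integrable Mu (\<lambda>u. u $ l * u $ m)"
proof -
  have "integrable Mu (\<lambda>u. (u $ l)\<^sup>2 + (u $ m)\<^sup>2)" using sq by simp
  moreover have "(\<lambda>u. u $ l * u $ m) \<in> borel_measurable Mu" by (rule meas_Mu[OF sb]) measurable
  moreover have "AE u in Mu. norm (u $ l * u $ m) \<le> norm ((u $ l)\<^sup>2 + (u $ m)\<^sup>2)"
    using abs_prod_le by simp
  ultimately show ?thesis by (rule Bochner_Integration.integrable_bound)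
qed

lemma int_lin:
  fixes Mu :: "(real^'m) measure"
  assumes ps: "prob_space Mu" and sb: "sets Mu = sets borel"
    and sq: "\<forall>l. integrable Mu (\<lambda>u. (u $ l)\<^sup>2)"
  shows "integrable Mu (\<lambda>u. a \<bullet> u)"
proof -
  have "integrable Mu (\<lambda>u. \<Sum>l\<in>UNIV. a $ l * u $ l)"
    by (rule Bochner_Integration.integrable_sum, rule Bochner_Integration.integrable_mult_right,
        rule int_comp[OF ps sb sq])
  then show ?thesis by (simp add: inner_vec_def)
qed

lemma int_bilin:
  fixes Mu :: "(real^'m) measure"
  assumes ps: "prob_space Mu" and sb: "sets Mu = sets borel"
    and sq: "\<forall>l. integrable Mu (\<lambda>u. (u $ l)\<^sup>2)"
  shows "integrable Mu (\<lambda>u. (a \<bullet> u) * (b \<bullet> u))"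
proof -
  have "integrable Mu (\<lambda>u. \<Sum>l\<in>UNIV. \<Sum>m\<in>UNIV. (a $ l * b $ m) * (u $ l * u $ m))"
    by (rule Bochner_Integration.integrable_sum, rule Bochner_Integration.integrable_sum,
        rule Bochner_Integration.integrable_mult_right, rule int_comp2[OF ps sb sq])
  moreover have "(a \<bullet> u) * (b \<bullet> u) = (\<Sum>l\<in>UNIV. \<Sum>m\<in>UNIV. (a $ l * b $ m) * (u $ l * u $ m))" for u
    unfolding inner_vec_def sum_product by (simp add: algebra_simps)
  ultimately show ?thesis by simp
qed

lemma g_lip: "ln (1 + exp (s::real)) \<le> ln (1 + exp s') + \<bar>s - s'\<bar>"
proof (cases "s \<le> s'")
  case True
  then have "1 + exp s \<le> 1 + exp s'" by simp
  then have "ln (1 + exp s) \<le> ln (1 + exp s')"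
    by (subst ln_le_cancel_iff) (auto intro: add_pos_pos)
  then show ?thesis by simp
next
  case False
  have eq: "ln (1 + exp x) = x + ln (exp (- x) + 1)" for x :: real
  proof -
    have "1 + exp x = exp x * (exp (- x) + 1)" by (simp add: algebra_simps exp_minus_inverse)
    moreover have "exp (- x) + 1 > 0" by (simp add: add_pos_pos)
    ultimately show ?thesis by (simp add: ln_mult)
  qed
  have "exp (- s) + 1 \<le> exp (- s') + 1" using False by simp
  then have "ln (exp (- s) + 1) \<le> ln (exp (- s') + 1)"
    by (subst ln_le_cancel_iff) (auto intro: add_pos_pos)
  then show ?thesis using False unfolding eq[of s] eq[of s'] by simp
qed

lemma ell_lip:
  assumes "\<bar>y\<bar> = 1"
  shows "ell_LL a y \<le> ell_LL b y + \<bar>a - b\<bar>"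
proof -
  have "- y * a - - y * b = y * (b - a)" by (simp add: algebra_simps)
  then have "\<bar>- y * a - - y * b\<bar> = \<bar>y\<bar> * \<bar>b - a\<bar>" by (simp add: abs_mult)
  then have "\<bar>- y * a - - y * b\<bar> = \<bar>a - b\<bar>" using assms by (simp add: abs_minus_commute)
  then show ?thesis unfolding ell_LL_def using g_lip[of "- y * a" "- y * b"] by simp
qed

lemma ell_bound:
  assumes "\<bar>y\<bar> = 1"
  shows "0 \<le> ell_LL t y \<and> ell_LL t y \<le> 1 + \<bar>t\<bar>"
proof
  show "0 \<le> ell_LL t y" unfolding ell_LL_def by simp
  have "exp 1 \<ge> (2::real)" using exp_ge_add_one_self[of 1] by simp
  have "exp (- y * t) \<le> exp \<bar>t\<bar>"
    using assms by (simp add: abs_mult abs_le_iff) (metis abs_ge_minus_self abs_ge_self abs_minus_cancel abs_mult assms mult_1 mult_minus_left)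
  moreover have "1 \<le> exp \<bar>t\<bar>" by simp
  ultimately have "1 + exp (- y * t) \<le> 2 * exp \<bar>t\<bar>" by linarith
  also have "\<dots> \<le> exp 1 * exp \<bar>t\<bar>" using \<open>exp 1 \<ge> 2\<close> by (intro mult_right_mono) auto
  also have "\<dots> = exp (1 + \<bar>t\<bar>)" by (simp add: exp_add)
  finally have h: "1 + exp (- y * t) \<le> exp (1 + \<bar>t\<bar>)" .
  have "ln (1 + exp (- y * t)) \<le> ln (exp (1 + \<bar>t\<bar>))"
    using h by (subst ln_le_cancel_iff) (auto intro: add_pos_pos)
  then show "ell_LL t y \<le> 1 + \<bar>t\<bar>" unfolding ell_LL_def by (simp only: ln_exp)
qed

lemma label_abs: "\<bar>label w z\<bar> = 1" unfolding label_def by simp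

lemma int_loss:
  fixes Mu :: "(real^'m) measure" and S :: "real^'m^'k"
  assumes ps: "prob_space Mu" and sb: "sets Mu = sets borel"
    and sq: "\<forall>l. integrable Mu (\<lambda>u. (u $ l)\<^sup>2)"
  shows "integrable Mu (\<lambda>u. ell_LL (c \<bullet> u) (label w (S *v u)))"
proof -
  interpret prob_space Mu by (rule ps)
  have "integrable Mu (\<lambda>u. 1 + \<bar>c \<bullet> u\<bar>)" using int_lin[OF ps sb sq] by simp
  moreover have "(\<lambda>u. ell_LL (c \<bullet> u) (label w (S *v u))) \<in> borel_measurable Mu"
  proof (rule meas_Mu[OF sb])
    have e: "(\<lambda>u. ell_LL (c \<bullet> u) (label w (S *v u))) =
       (\<lambda>u. ln (1 + exp (- (if 0 \<le> (w v* S) \<bullet> u then 1 else -1) * (c \<bullet> u))))"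
      unfolding ell_LL_def label_def by (simp add: dot_lmul_matrix)
    show "(\<lambda>u. ell_LL (c \<bullet> u) (label w (S *v u))) \<in> borel_measurable borel"
      unfolding e by measurable
  qed
  moreover have "AE u in Mu. norm (ell_LL (c \<bullet> u) (label w (S *v u))) \<le> norm (1 + \<bar>c \<bullet> u\<bar>)"
  proof (rule AE_I2)
    fix u :: "real^'m"
    have "0 \<le> ell_LL (c \<bullet> u) (label w (S *v u)) \<and> ell_LL (c \<bullet> u) (label w (S *v u)) \<le> 1 + \<bar>c \<bullet> u\<bar>"
      by (rule ell_bound[OF label_abs])
    then show "norm (ell_LL (c \<bullet> u) (label w (S *v u))) \<le> norm (1 + \<bar>c \<bullet> u\<bar>)" by simp
  qed
  ultimately show ?thesis by (rule Bochner_Integration.integrable_bound)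
qed

lemma cs_single:
  fixes M :: "'a measure" and X :: "'a \<Rightarrow> real"
  assumes ps: "prob_space M" and iX: "integrable M X" and iX2: "integrable M (\<lambda>u. (X u)^2)"
  shows "2 * c * integral\<^sup>L M (\<lambda>u. \<bar>X u\<bar>) - c^2 \<le> integral\<^sup>L M (\<lambda>u. (X u)^2)"
proof -
  interpret prob_space M by (rule ps)
  have "0 \<le> integral\<^sup>L M (\<lambda>u. (\<bar>X u\<bar> - c)^2)" by simp
  also have "(\<lambda>u. (\<bar>X u\<bar> - c)^2) = (\<lambda>u. ((X u)^2 - 2 * c * \<bar>X u\<bar>) + c^2)"
    by (rule ext) (simp add: power2_eq_square algebra_simps abs_mult_self_eq)
  also have "integral\<^sup>L M \<dots> = integral\<^sup>L M (\<lambda>u. (X u)^2 - 2 * c * \<bar>X u\<bar>) + c^2"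
    by (subst Bochner_Integration.integral_add) (use iX iX2 in \<open>auto simp: prob_space\<close>)
  also have "integral\<^sup>L M (\<lambda>u. (X u)^2 - 2 * c * \<bar>X u\<bar>) = integral\<^sup>L M (\<lambda>u. (X u)^2) - 2 * c * integral\<^sup>L M (\<lambda>u. \<bar>X u\<bar>)"
    by (subst Bochner_Integration.integral_diff) (use iX iX2 in auto)
  finally show ?thesis by simp
qed

lemma cs_sum:
  fixes M :: "'a measure" and X :: "'e \<Rightarrow> 'a \<Rightarrow> real"
  assumes ps: "prob_space M" and fin: "finite I" and P0: "\<forall>e\<in>I. P e \<ge> 0" and P1: "(\<Sum>e\<in>I. P e) = 1"
    and iX: "\<And>e. e \<in> I \<Longrightarrow> integrable M (X e)" and iX2: "\<And>e. e \<in> I \<Longrightarrow> integrable M (\<lambda>u. (X e u)^2)"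
  shows "(\<Sum>e\<in>I. P e * integral\<^sup>L M (\<lambda>u. \<bar>X e u\<bar>)) \<le> sqrt (\<Sum>e\<in>I. P e * integral\<^sup>L M (\<lambda>u. (X e u)^2))"
proof -
  define S where "S = (\<Sum>e\<in>I. P e * integral\<^sup>L M (\<lambda>u. \<bar>X e u\<bar>))"
  define Q where "Q = (\<Sum>e\<in>I. P e * integral\<^sup>L M (\<lambda>u. (X e u)^2))"
  have "(\<Sum>e\<in>I. P e * (2 * S * integral\<^sup>L M (\<lambda>u. \<bar>X e u\<bar>) - S^2)) \<le> Q"
    unfolding Q_def
    by (rule sum_mono, rule mult_left_mono, rule cs_single[OF ps iX iX2]) (use P0 in auto)
  moreover have "(\<Sum>e\<in>I. P e * (2 * S * integral\<^sup>L M (\<lambda>u. \<bar>X e u\<bar>) - S^2)) = 2 * S * S - S^2"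
  proof -
    have "(\<Sum>e\<in>I. P e * (2 * S * integral\<^sup>L M (\<lambda>u. \<bar>X e u\<bar>) - S^2))
        = 2 * S * (\<Sum>e\<in>I. P e * integral\<^sup>L M (\<lambda>u. \<bar>X e u\<bar>)) - S^2 * (\<Sum>e\<in>I. P e)"
      by (simp add: algebra_simps sum_subtractf sum_distrib_left sum_distrib_right)
    then show ?thesis using P1 unfolding S_def by simp
  qed
  ultimately have "S^2 \<le> Q" by (simp add: power2_eq_square)
  then show ?thesis unfolding S_def Q_def by (rule real_le_rsqrt)
qed

lemma quad_form:
  fixes Dl :: "'e \<Rightarrow> real^'m \<Rightarrow> real^'d" and \<theta> :: "real^'d" and Mu :: "(real^'m) measure"
  assumes fin: "finite I"
    and int: "\<And>e a b. e \<in> I \<Longrightarrow> integrable Mu (\<lambda>u. Dl e u $ a * Dl e u $ b)"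
  shows "\<theta> \<bullet> ((\<chi> a b. \<Sum>e\<in>I. P e * integral\<^sup>L Mu (\<lambda>u. Dl e u $ a * Dl e u $ b)) *v \<theta>)
       = (\<Sum>e\<in>I. P e * integral\<^sup>L Mu (\<lambda>u. (\<theta> \<bullet> Dl e u)^2))"
proof -
  define J where "J e a b = integral\<^sup>L Mu (\<lambda>u. Dl e u $ a * Dl e u $ b)" for e a b
  have sqexp: "(\<theta> \<bullet> Dl e u)^2 = (\<Sum>a\<in>UNIV. \<Sum>b\<in>UNIV. (\<theta> $ a * \<theta> $ b) * (Dl e u $ a * Dl e u $ b))" for e u
    by (simp add: inner_vec_def power2_eq_square sum_product algebra_simps)
  have intexp: "integral\<^sup>L Mu (\<lambda>u. (\<theta> \<bullet> Dl e u)^2) = (\<Sum>a\<in>UNIV. \<Sum>b\<in>UNIV. (\<theta> $ a * \<theta> $ b) * J e a b)"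
    if e: "e \<in> I" for e
  proof -
    have "integral\<^sup>L Mu (\<lambda>u. (\<theta> \<bullet> Dl e u)^2)
        = integral\<^sup>L Mu (\<lambda>u. \<Sum>a\<in>UNIV. \<Sum>b\<in>UNIV. (\<theta> $ a * \<theta> $ b) * (Dl e u $ a * Dl e u $ b))"
      by (simp only: sqexp)
    also have "\<dots> = (\<Sum>a\<in>UNIV. integral\<^sup>L Mu (\<lambda>u. \<Sum>b\<in>UNIV. (\<theta> $ a * \<theta> $ b) * (Dl e u $ a * Dl e u $ b)))"
      by (rule Bochner_Integration.integral_sum)
         (rule Bochner_Integration.integrable_sum, rule Bochner_Integration.integrable_mult_right, rule int[OF e])
    also have "\<dots> = (\<Sum>a\<in>UNIV. \<Sum>b\<in>UNIV. (\<theta> $ a * \<theta> $ b) * J e a b)"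
    proof (rule sum.cong[OF refl])
      fix a
      have "integral\<^sup>L Mu (\<lambda>u. \<Sum>b\<in>UNIV. (\<theta> $ a * \<theta> $ b) * (Dl e u $ a * Dl e u $ b))
          = (\<Sum>b\<in>UNIV. integral\<^sup>L Mu (\<lambda>u. (\<theta> $ a * \<theta> $ b) * (Dl e u $ a * Dl e u $ b)))"
        by (rule Bochner_Integration.integral_sum)
           (rule Bochner_Integration.integrable_mult_right, rule int[OF e])
      also have "\<dots> = (\<Sum>b\<in>UNIV. (\<theta> $ a * \<theta> $ b) * J e a b)"
        unfolding J_def by (rule sum.cong[OF refl]) (rule Bochner_Integration.integral_mult_right, rule int[OF e])
      finally show "integral\<^sup>L Mu (\<lambda>u. \<Sum>b\<in>UNIV. (\<theta> $ a * \<theta> $ b) * (Dl e u $ a * Dl e u $ b))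
          = (\<Sum>b\<in>UNIV. (\<theta> $ a * \<theta> $ b) * J e a b)" .
    qed
    finally show ?thesis .
  qed
  have "\<theta> \<bullet> ((\<chi> a b. \<Sum>e\<in>I. P e * integral\<^sup>L Mu (\<lambda>u. Dl e u $ a * Dl e u $ b)) *v \<theta>)
      = (\<Sum>a\<in>UNIV. \<theta> $ a * (\<Sum>b\<in>UNIV. (\<Sum>e\<in>I. P e * J e a b) * \<theta> $ b))"
    unfolding J_def by (simp add: inner_vec_def matrix_vector_mult_def)
  also have "\<dots> = (\<Sum>a\<in>UNIV. \<Sum>b\<in>UNIV. \<Sum>e\<in>I. P e * ((\<theta> $ a * \<theta> $ b) * J e a b))"
    by (simp add: sum_distrib_left sum_distrib_right mult.commute mult.left_commute)
  also have "\<dots> = (\<Sum>a\<in>UNIV. \<Sum>e\<in>I. \<Sum>b\<in>UNIV. P e * ((\<theta> $ a * \<theta> $ b) * J e a b))"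
    by (rule sum.cong[OF refl]) (rule sum.swap)
  also have "\<dots> = (\<Sum>e\<in>I. \<Sum>a\<in>UNIV. \<Sum>b\<in>UNIV. P e * ((\<theta> $ a * \<theta> $ b) * J e a b))"
    by (rule sum.swap)
  also have "\<dots> = (\<Sum>e\<in>I. P e * (\<Sum>a\<in>UNIV. \<Sum>b\<in>UNIV. (\<theta> $ a * \<theta> $ b) * J e a b))"
    by (simp add: sum_distrib_left)
  also have "\<dots> = (\<Sum>e\<in>I. P e * integral\<^sup>L Mu (\<lambda>u. (\<theta> \<bullet> Dl e u)^2))"
    by (rule sum.cong[OF refl]) (simp add: intexp)
  finally show ?thesis .
qed

theorem corollary1:
  fixes Mu :: "(real^'m) measure"
    and E Etr :: "'e set" and P :: "'e \<Rightarrow> real"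
    and B :: "'e \<Rightarrow> real^'k^'k" and C :: "'e \<Rightarrow> real^'m^'k"
    and G :: "real^'k^'d" and w :: "real^'k"
    and ep :: 'e and \<theta> :: "real^'d"
  assumes "prob_space Mu" and "sets Mu = sets borel"
    and "\<forall>l. integrable Mu (\<lambda>u. (u $ l)\<^sup>2)"
    and "\<forall>e\<in>E. acyclic_lin (B e)"
    and "\<forall>i\<in>interv_set E B C. \<not> anc_y E B w i"
    and "Etr \<subseteq> E" and "finite Etr"
    and "\<forall>e\<in>Etr. P e \<ge> 0" and "(\<Sum>e\<in>Etr. P e) = 1"
    and "ep \<in> E"
  shows "integral\<^sup>L Mu (\<lambda>u. ell_LL (\<theta> \<bullet> (G *v sol_map (B ep) (C ep) u))
                                   (label w (sol_map (B ep) (C ep) u)))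
         \<le> (\<Sum>e\<in>Etr. P e * integral\<^sup>L Mu (\<lambda>u. ell_LL (\<theta> \<bullet> (G *v sol_map (B e) (C e) u))
                                   (label w (sol_map (B e) (C e) u))))
           + norm \<theta> * sqrt (lambda_max (M_shift Mu Etr P G B C ep))"
proof -
  note ps = assms(1) and sb = assms(2) and sq = assms(3) and acyc = assms(4) and sp = assms(5)
    and sub = assms(6) and fin = assms(7) and P0 = assms(8) and P1 = assms(9) and epE = assms(10)
  interpret prob_space Mu by (rule ps)
  define Sm where "Sm e = matrix_inv (mat 1 - B e) ** C e" for e
  have sol: "sol_map (B e) (C e) u = Sm e *v u" for e u by (simp add: sol_map_def Sm_def)
  define A where "A e = G ** Sm e" for e
  define cE where "cE e = \<theta> v* A e" for e
  have thx: "\<theta> \<bullet> (G *v sol_map (B e) (C e) u) = cE e \<bullet> u" for e u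
    by (simp add: sol A_def cE_def matrix_vector_mul_assoc dot_lmul_matrix)
  have thx': "\<theta> \<bullet> (G *v (Sm e *v u)) = cE e \<bullet> u" for e u
    using thx[of e u] unfolding sol .
  define y where "y u = label w (Sm ep *v u)" for u
  have ylab: "label w (sol_map (B e) (C e) u) = y u" if "e \<in> Etr" for e u
    using label_same[OF acyc sp _ epE, of e u] that sub unfolding y_def sol by auto
  define Lp where "Lp = integral\<^sup>L Mu (\<lambda>u. ell_LL (cE ep \<bullet> u) (y u))"
  define Le where "Le e = integral\<^sup>L Mu (\<lambda>u. ell_LL (cE e \<bullet> u) (y u))" for e
  define X where "X e u = (cE ep - cE e) \<bullet> u" for e u
  have goalL: "integral\<^sup>L Mu (\<lambda>u. ell_LL (\<theta> \<bullet> (G *v sol_map (B ep) (C ep) u))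
                                   (label w (sol_map (B ep) (C ep) u))) = Lp"
    unfolding Lp_def y_def sol thx' ..
  have goalR: "(\<Sum>e\<in>Etr. P e * integral\<^sup>L Mu (\<lambda>u. ell_LL (\<theta> \<bullet> (G *v sol_map (B e) (C e) u))
                                   (label w (sol_map (B e) (C e) u)))) = (\<Sum>e\<in>Etr. P e * Le e)"
    by (rule sum.cong[OF refl]) (simp add: Le_def thx ylab)
  have intL: "integrable Mu (\<lambda>u. ell_LL (c \<bullet> u) (y u))" for c
    unfolding y_def by (rule int_loss[OF ps sb sq])
  have intX: "integrable Mu (X e)" for e
    unfolding X_def by (rule int_lin[OF ps sb sq])
  have intX2: "integrable Mu (\<lambda>u. (X e u)^2)" for e
    using int_bilin[OF ps sb sq, of "cE ep - cE e" "cE ep - cE e"] unfolding X_def power2_eq_square .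
  have step1: "Lp \<le> Le e + integral\<^sup>L Mu (\<lambda>u. \<bar>X e u\<bar>)" for e
  proof -
    have "Lp \<le> integral\<^sup>L Mu (\<lambda>u. ell_LL (cE e \<bullet> u) (y u) + \<bar>X e u\<bar>)"
      unfolding Lp_def
    proof (rule integral_mono)
      show "integrable Mu (\<lambda>u. ell_LL (cE e \<bullet> u) (y u) + \<bar>X e u\<bar>)"
        using intL intX by auto
      fix u
      have "cE ep \<bullet> u - cE e \<bullet> u = X e u" unfolding X_def by (simp add: inner_diff_left)
      then show "ell_LL (cE ep \<bullet> u) (y u) \<le> ell_LL (cE e \<bullet> u) (y u) + \<bar>X e u\<bar>"
        using ell_lip[OF label_abs[of w "Sm ep *v u"], of "cE ep \<bullet> u" "cE e \<bullet> u"]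
        unfolding y_def by simp
    qed (rule intL)
    also have "\<dots> = Le e + integral\<^sup>L Mu (\<lambda>u. \<bar>X e u\<bar>)"
      unfolding Le_def by (rule Bochner_Integration.integral_add) (use intL intX in auto)
    finally show ?thesis .
  qed
  have "Lp = (\<Sum>e\<in>Etr. P e * Lp)" using P1 by (simp add: sum_distrib_right[symmetric])
  also have "\<dots> \<le> (\<Sum>e\<in>Etr. P e * (Le e + integral\<^sup>L Mu (\<lambda>u. \<bar>X e u\<bar>)))"
    by (rule sum_mono, rule mult_left_mono[OF step1]) (use P0 in auto)
  also have "\<dots> = (\<Sum>e\<in>Etr. P e * Le e) + (\<Sum>e\<in>Etr. P e * integral\<^sup>L Mu (\<lambda>u. \<bar>X e u\<bar>))"
    by (simp add: distrib_left sum.distrib)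
  finally have s2: "Lp \<le> (\<Sum>e\<in>Etr. P e * Le e) + (\<Sum>e\<in>Etr. P e * integral\<^sup>L Mu (\<lambda>u. \<bar>X e u\<bar>))" .
  have s3: "(\<Sum>e\<in>Etr. P e * integral\<^sup>L Mu (\<lambda>u. \<bar>X e u\<bar>)) \<le> sqrt (\<Sum>e\<in>Etr. P e * integral\<^sup>L Mu (\<lambda>u. (X e u)^2))"
    by (rule cs_sum[OF ps fin P0 P1 intX intX2])
  define M where "M = M_shift Mu Etr P G B C ep"
  define Dl where "Dl e u = G *v sol_map (B ep) (C ep) u - G *v sol_map (B e) (C e) u" for e u
  have DlA: "Dl e u $ a = (A ep - A e) $ a \<bullet> u" for e u a
    unfolding Dl_def by (simp add: sol A_def matrix_vector_mul_assoc matrix_vector_mul_component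
       matrix_vector_mult_diff_rdistrib[symmetric])
  have Mdef: "M = (\<chi> a b. \<Sum>e\<in>Etr. P e * integral\<^sup>L Mu (\<lambda>u. Dl e u $ a * Dl e u $ b))"
    unfolding M_def M_shift_def Dl_def ..
  have thD: "\<theta> \<bullet> Dl e u = X e u" for e u
    unfolding Dl_def X_def by (simp add: inner_diff_right thx inner_diff_left)
  have s4: "(\<Sum>e\<in>Etr. P e * integral\<^sup>L Mu (\<lambda>u. (X e u)^2)) = \<theta> \<bullet> (M *v \<theta>)"
    unfolding Mdef
    by (subst quad_form[OF fin]) (simp_all add: DlA thD int_bilin[OF ps sb sq])
  have symM: "transpose M = M"
    unfolding M_def M_shift_def transpose_def by (simp add: vec_eq_iff mult.commute)
  have s5: "\<theta> \<bullet> (M *v \<theta>) \<le> lambda_max M * (norm \<theta>)^2" by (rule rayleigh[OF symM])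
  have "sqrt (\<Sum>e\<in>Etr. P e * integral\<^sup>L Mu (\<lambda>u. (X e u)^2)) \<le> sqrt (lambda_max M * (norm \<theta>)^2)"
    using s4 s5 by simp
  also have "\<dots> = norm \<theta> * sqrt (lambda_max M)"
    by (simp add: real_sqrt_mult)
  finally have s6: "sqrt (\<Sum>e\<in>Etr. P e * integral\<^sup>L Mu (\<lambda>u. (X e u)^2)) \<le> norm \<theta> * sqrt (lambda_max M)" .
  show ?thesis unfolding goalL goalR M_def[symmetric] using s2 s3 s6 by linarith
qed

end
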